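(* Let $k$ be an algebraically closed field of characteristic zero, $n\ge1$, $q\in k$ a primitive $2n$-th root of unity, $a\in k\setminus\{0\}$. Let $\mathfrak wH_{4n}$ be the weak Hopf algebra generated by $Z,X$ with $Z^{2n+1}=Z$, $ZX=qXZ$, $X^2=0$ and comultiplication $\Delta(Z)=Z\otimes Z+a(1-q^{-2})Z^{n+1}X\otimes ZX$, $\Delta(X)=X\otimes 1+Z^n\otimes X$ (tensor products of modules are formed via $\Delta$). For $i\in\mathbb Z_{2n}$ let $S_i$ be the $1$-dimensional module with $X$ acting by $0$ and $Z$ by $q^i$; $M_i$ the $2$-dimensional module with basis $v_1^i,v_2^i$, $Xv_1^i=v_2^i$, $Xv_2^i=0$, $Zv_1^i=q^iv_1^i$, $Zv_2^i=q^{i+1}v_2^i$; $N_0$ the $1$-dimensional module on which $Z,X$ act by $0$; $N_1$ the $2$-dimensional module with basis $w_1,w_2$, $Xw_1=w_2$, $Xw_2=0$, $Z$ acting by $0$. Then for all $i,j\in\mathbb Z_{2n}$ (indices modulo $2n$): (1) $S_i\otimes S_j\cong S_{i+j}\cong S_j\otimes S_i$; (2) $S_i\otimes M_j\cong M_{i+j}\cong M_j\otimes S_i$; (3) $M_i\otimes M_j\cong M_{i+j}\oplus M_{i+j+1}\cong M_j\otimes M_i$; (4) $N_0\otimes N_0\cong N_0\cong N_0\otimes S_i\cong S_i\otimes N_0$; (5) $N_0\otimes N_1\cong N_0\oplus N_0\cong N_0\otimes M_i$; (6) $N_1\otimes N_0\cong N_1\cong M_i\otimes N_0\cong N_1\otimes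 S_i\cong S_i\otimes N_1$; (7) $N_1\otimes N_1\cong N_1\oplus N_1\cong N_1\otimes M_i\cong M_i\otimes N_1$. *)

theory Defs
  imports "Jordan_Normal_Form.Matrix" "HOL-Computational_Algebra.Polynomial"
begin

text \<open>A finite-dimensional module over the weak Hopf algebra wH_4n is represented
  by the pair of square matrices (action of Z, action of X) on k^d.\<close>

type_synonym 'a wmod = "'a mat \<times> 'a mat"

definition alg_closed_field :: "'a::field itself \<Rightarrow> bool" where
  "alg_closed_field _ = (\<forall>p::'a poly. degree p \<ge> 1 \<longrightarrow> (\<exists>x. poly p x = 0))"

definition primitive_root :: "nat \<Rightarrow> 'a::field \<Rightarrow> bool" where
  "primitive_root m q = (q ^ m = 1 \<and> (\<forall>j. 0 < j \<and> j < m \<longrightarrow> q ^ j \<noteq> 1))"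

text \<open>Kronecker product; basis vector e_i (x) e_j has index i * dim B + j.\<close>
definition kron :: "'a::semiring_1 mat \<Rightarrow> 'a mat \<Rightarrow> 'a mat" where
  "kron A B = mat (dim_row A * dim_row B) (dim_col A * dim_col B)
     (\<lambda>(i,j). A $$ (i div dim_row B, j div dim_col B) * B $$ (i mod dim_row B, j mod dim_col B))"

text \<open>Tensor product of modules via the comultiplication
  Delta(Z) = Z(x)Z + a(1-q^-2) Z^(n+1)X (x) ZX,  Delta(X) = X(x)1 + Z^n(x)X.\<close>
definition wtensor :: "nat \<Rightarrow> 'a::field \<Rightarrow> 'a \<Rightarrow> 'a wmod \<Rightarrow> 'a wmod \<Rightarrow> 'a wmod" where
  "wtensor n q a V W = (let (Z1, X1) = V; (Z2, X2) = W in
     (kron Z1 Z2 + (a * (1 - inverse (q ^ 2))) \<cdot>\<^sub>m kron ((Z1 ^\<^sub>m (n + 1)) * X1) (Z2 * X2),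
      kron X1 (1\<^sub>m (dim_row Z2)) + kron (Z1 ^\<^sub>m n) X2))"

definition wdsum :: "'a::zero wmod \<Rightarrow> 'a wmod \<Rightarrow> 'a wmod" where
  "wdsum V W = (let (Z1, X1) = V; (Z2, X2) = W; d1 = dim_row Z1; d2 = dim_row Z2 in
     (four_block_mat Z1 (0\<^sub>m d1 d2) (0\<^sub>m d2 d1) Z2,
      four_block_mat X1 (0\<^sub>m d1 d2) (0\<^sub>m d2 d1) X2))"

definition wiso :: "'a::field wmod \<Rightarrow> 'a wmod \<Rightarrow> bool" (infix \<open>\<cong>\<^sub>w\<close> 50) where
  "wiso V W = (let (Z1, X1) = V; (Z2, X2) = W; d = dim_row Z1 in
     dim_row Z2 = d \<and>
     (\<exists>P. P \<in> carrier_mat d d \<and> invertible_mat P \<and> P * Z1 = Z2 * P \<and> P * X1 = X2 * P))"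

definition Smod :: "'a::field \<Rightarrow> nat \<Rightarrow> 'a wmod" where
  "Smod q i = (mat 1 1 (\<lambda>_. q ^ i), 0\<^sub>m 1 1)"

definition Mmod :: "'a::field \<Rightarrow> nat \<Rightarrow> 'a wmod" where
  "Mmod q i = (mat 2 2 (\<lambda>(r,c). if r = c then q ^ (i + r) else 0),
               mat 2 2 (\<lambda>(r,c). if r = 1 \<and> c = 0 then 1 else 0))"

definition N0mod :: "'a::field wmod" where
  "N0mod = (0\<^sub>m 1 1, 0\<^sub>m 1 1)"

definition N1mod :: "'a::field wmod" where
  "N1mod = (0\<^sub>m 2 2, mat 2 2 (\<lambda>(r,c). if r = 1 \<and> c = 0 then 1 else 0))"

end

theory Submission
  imports Defs
begin

lemma diag_pow_entry:
  fixes f :: "nat \<Rightarrow> 'a::comm_ring_1"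
  shows "i < d \<Longrightarrow> j < d \<Longrightarrow> ((mat d d (\<lambda>(r,c). if r = c then f r else 0)) ^\<^sub>m k) $$ (i,j) = (if i = j then f i ^ k else 0)"
proof (induction k arbitrary: i j)
  case 0 then show ?case by simp
next
  case (Suc k)
  have "((mat d d (\<lambda>(r,c). if r = c then f r else 0)) ^\<^sub>m Suc k) $$ (i,j)
     = (\<Sum>l\<in>{0..<d}. ((mat d d (\<lambda>(r,c). if r = c then f r else 0)) ^\<^sub>m k) $$ (i,l) * (if l = j then f l else 0))"
    using Suc.prems by (simp add: scalar_prod_def)
  also have "\<dots> = (\<Sum>l\<in>{0..<d}. (if i = l then f i ^ k else 0) * (if l = j then f l else 0))"
    using Suc.IH Suc.prems by (intro sum.cong) auto
  also have "\<dots> = (\<Sum>l\<in>{0..<d}. if l = i then f i ^ k * (if i = j then f i else 0) else 0)"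
    by (intro sum.cong) auto
  also have "\<dots> = (if i = j then f i ^ Suc k else 0)"
    using Suc.prems by (simp add: sum.delta)
  finally show ?case .
qed

lemma diag_pow:
  fixes f :: "nat \<Rightarrow> 'a::comm_ring_1"
  shows "(mat d d (\<lambda>(r,c). if r = c then f r else 0)) ^\<^sub>m k = mat d d (\<lambda>(r,c). if r = c then f r ^ k else 0)"
  by (rule eq_matI) (auto simp del: pow_mat.simps simp: diag_pow_entry)

lemma one_pow: "(mat 1 1 (\<lambda>_. x)) ^\<^sub>m k = mat 1 1 (\<lambda>_. (x::'a::comm_ring_1) ^ k)"
  by (induction k) (auto intro!: eq_matI simp: scalar_prod_def)

lemma zero_pow: "(0\<^sub>m d d :: 'a::comm_ring_1 mat) ^\<^sub>m Suc k = 0\<^sub>m d d"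
  by (induction k) auto

lemma wisoI:
  assumes "dim_row Z1 = d" "dim_row Z2 = d" "P \<in> carrier_mat d d" "P' \<in> carrier_mat d d"
    "P * P' = 1\<^sub>m d" "P' * P = 1\<^sub>m d" "P * Z1 = Z2 * P" "P * X1 = X2 * P"
  shows "(Z1, X1) \<cong>\<^sub>w (Z2, X2)"
proof -
  have "invertible_mat P" unfolding invertible_mat_def inverts_mat_def
    using assms by (auto intro!: exI[of _ P'])
  then show ?thesis using assms unfolding wiso_def by auto
qed

lemma less4: "(i::nat) < 4 \<Longrightarrow> i = 0 \<or> i = 1 \<or> i = 2 \<or> i = 3" by auto
lemma less2: "(i::nat) < 2 \<Longrightarrow> i = 0 \<or> i = 1" by auto
lemma sum4: "sum f {0..<4::nat} = f 0 + f 1 + f 2 + f 3"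
  by (simp add: numeral_eq_Suc atLeast0LessThan lessThan_Suc add.commute add.left_commute)
lemma sum2: "sum f {0..<2::nat} = f 0 + f 1"
  by (simp add: numeral_eq_Suc atLeast0LessThan lessThan_Suc add.commute add.left_commute)



definition MZ :: "'a::field \<Rightarrow> nat \<Rightarrow> 'a mat" where
  "MZ q i = mat 2 2 (\<lambda>(r,c). if r = c then q ^ (i + r) else 0)"
definition XX :: "'a::field mat" where
  "XX = mat 2 2 (\<lambda>(r,c). if r = 1 \<and> c = 0 then 1 else 0)"

lemma Mmod_alt: "Mmod q i = (MZ q i, XX)" by (simp add: Mmod_def MZ_def XX_def)
lemma N1mod_alt: "N1mod = (0\<^sub>m 2 2, XX)" by (simp add: N1mod_def XX_def)

lemma MZ_pow: "MZ q i ^\<^sub>m k = mat 2 2 (\<lambda>(r,c). if r = c then (q^(i+r))^k else 0)"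
  unfolding MZ_def by (rule diag_pow)

lemma MZ_pow_X: "MZ q i ^\<^sub>m k * XX = mat 2 2 (\<lambda>(r,c). if r = 1 \<and> c = 0 then (q^(i+1))^k else 0)"
  by (rule eq_matI) (auto simp: MZ_pow XX_def scalar_prod_def sum2 dest!: less2)

lemma MZ_X: "MZ q i * XX = mat 2 2 (\<lambda>(r,c). if r = 1 \<and> c = 0 then q^(i+1) else 0)"
  by (rule eq_matI) (auto simp: MZ_def XX_def scalar_prod_def sum2 dest!: less2)

lemma kron_mat: "kron (mat m1 n1 f) (mat m2 n2 g) = mat (m1*m2) (n1*n2) (\<lambda>(r,c). f (r div m2, c div n2) * g (r mod m2, c mod n2))"
proof -
  have "\<And>i j. i < m1 * m2 \<Longrightarrow> j < n1 * n2 \<Longrightarrow> i mod m2 < m2 \<and> j mod n2 < n2"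
    by (metis mod_less_divisor mult_0_right not_gr_zero not_less_zero)
  then show ?thesis unfolding kron_def by (intro eq_matI) (auto simp: less_mult_imp_div_less)
qed

lemma MM_explicit:
  "wtensor n q a (Mmod q i) (Mmod q j) =
   (mat 4 4 (\<lambda>(r,s). if r = s then q^(i + r div 2) * q^(j + r mod 2)
        else if r = 3 \<and> s = 0 then a * (1 - inverse (q^2)) * ((q^(i+1))^(n+1) * q^(j+1)) else 0),
    mat 4 4 (\<lambda>(r,s). if r = 2 \<and> s = 0 then 1 else if r = 1 \<and> s = 0 then (q^i)^n
        else if r = 3 \<and> s = 1 then 1 else if r = 3 \<and> s = 2 then (q^(i+1))^n else 0))"
  unfolding wtensor_def Mmod_alt Let_def prod.case
  unfolding MZ_pow_X MZ_X
  unfolding MZ_pow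
  unfolding MZ_def XX_def one_mat_def kron_mat
  apply (simp only: prod.inject)
  apply (intro conjI eq_matI)
  subgoal for r s using less4[of r] less4[of s] by simp (elim disjE; simp)
  apply simp_all
  subgoal for r s using less4[of r] less4[of s] by simp (elim disjE; simp)
  done


lemma mat4_eqI:
  assumes "dim_row A = 4" "dim_col A = 4" "dim_row B = 4" "dim_col B = 4"
    "list_all (\<lambda>r. list_all (\<lambda>s. A $$ (r,s) = B $$ (r,s)) [0,1,2,3]) [0,1,2,3]"
  shows "A = B"
proof (rule eq_matI)
  fix r s assume "r < dim_row B" "s < dim_col B"
  then have "r \<in> set [0,1,2,3]" "s \<in> set [0,1,2,3]" using assms by auto
  then show "A $$ (r,s) = B $$ (r,s)" using assms(5) by (auto simp: list_all_iff)
qed (use assms in auto)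

lemma mat2_eqI:
  assumes "dim_row A = 2" "dim_col A = 2" "dim_row B = 2" "dim_col B = 2"
    "list_all (\<lambda>r. list_all (\<lambda>s. A $$ (r,s) = B $$ (r,s)) [0,1]) [0,1]"
  shows "A = B"
proof (rule eq_matI)
  fix r s assume "r < dim_row B" "s < dim_col B"
  then have "r \<in> set [0,1]" "s \<in> set [0,1]" using assms by auto
  then show "A $$ (r,s) = B $$ (r,s)" using assms(5) by (auto simp: list_all_iff)
qed (use assms in auto)

definition ZT :: "'a::field \<Rightarrow> 'a \<Rightarrow> 'a \<Rightarrow> 'a \<Rightarrow> 'a mat" where
  "ZT w0 w1 w2 d = mat 4 4 (\<lambda>(r,s). if r = s then (if r = 0 then w0 else if r = 3 then w2 else w1)
      else if r = 3 \<and> s = 0 then d else 0)"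
definition XT :: "'a::field \<Rightarrow> 'a \<Rightarrow> 'a mat" where
  "XT p p' = mat 4 4 (\<lambda>(r,s). if r = 2 \<and> s = 0 then 1 else if r = 1 \<and> s = 0 then p
        else if r = 3 \<and> s = 1 then 1 else if r = 3 \<and> s = 2 then p' else 0)"
definition XD :: "'a::field mat" where
  "XD = mat 4 4 (\<lambda>(r,s). if (r = 1 \<and> s = 0) \<or> (r = 3 \<and> s = 2) then 1 else 0)"

lemma iso_gen:
  fixes p t d w0 w1 w2 :: "'a::field"
  assumes "d + t * w2 = t * w0"
  shows "(ZT w0 w1 w2 d, XT p (-p)) \<cong>\<^sub>w (ZT w0 w1 w2 0, XD)"
    and "(ZT w0 w1 w2 0, XD) \<cong>\<^sub>w (ZT w0 w1 w2 d, XT p (-p))"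
proof -
  define Q :: "'a mat" where "Q = mat 4 4 (\<lambda>(r,c). [[1,0,0,0],[0,p,1,0],[0,1,0,0],[t,0,0,1]] ! r ! c)"
  define Qi :: "'a mat" where "Qi = mat 4 4 (\<lambda>(r,c). [[1,0,0,0],[0,0,1,0],[0,1,-p,0],[-t,0,0,1]] ! r ! c)"
  have c: "Q \<in> carrier_mat 4 4" "Qi \<in> carrier_mat 4 4" by (auto simp: Q_def Qi_def)
  have e1: "Q * Qi = 1\<^sub>m 4" "Qi * Q = 1\<^sub>m 4"
    by (auto simp: Q_def Qi_def scalar_prod_def sum4 intro!: mat4_eqI)
  have e2: "Qi * ZT w0 w1 w2 d = ZT w0 w1 w2 0 * Qi" "Q * ZT w0 w1 w2 0 = ZT w0 w1 w2 d * Q"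
    using assms
    by (auto simp: Q_def Qi_def ZT_def scalar_prod_def sum4 intro!: mat4_eqI simp: algebra_simps)
  have e3: "Qi * XT p (-p) = XD * Qi" "Q * XD = XT p (-p) * Q"
    by (auto simp: Q_def Qi_def XT_def XD_def scalar_prod_def sum4 intro!: mat4_eqI)
  show "(ZT w0 w1 w2 d, XT p (-p)) \<cong>\<^sub>w (ZT w0 w1 w2 0, XD)"
    by (rule wisoI[OF _ _ c(2) c(1) e1(2) e1(1) e2(1) e3(1)]) (auto simp: ZT_def)
  show "(ZT w0 w1 w2 0, XD) \<cong>\<^sub>w (ZT w0 w1 w2 d, XT p (-p))"
    by (rule wisoI[OF _ _ c(1) c(2) e1(1) e1(2) e2(2) e3(2)]) (auto simp: ZT_def)
qed


lemma mat1_eqI: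
  assumes "dim_row A = 1" "dim_col A = 1" "dim_row B = 1" "dim_col B = 1" "A $$ (0,0) = B $$ (0,0)"
  shows "A = B"
  by (rule eq_matI) (use assms in auto)

lemma wiso_refl: "Z \<in> carrier_mat d d \<Longrightarrow> X \<in> carrier_mat d d \<Longrightarrow> (Z, X) \<cong>\<^sub>w (Z, X)"
  by (rule wisoI[where P = "1\<^sub>m d" and P' = "1\<^sub>m d" and d = d]) auto

lemma wiso_trans:
  assumes "(Z1, X1) \<cong>\<^sub>w (Z2, X2)" "(Z2, X2) \<cong>\<^sub>w (Z3, X3)"
    and c: "Z1 \<in> carrier_mat d d" "X1 \<in> carrier_mat d d" "Z2 \<in> carrier_mat d d" "X2 \<in> carrier_mat d d"
      "Z3 \<in> carrier_mat d d" "X3 \<in> carrier_mat d d"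
  shows "(Z1, X1) \<cong>\<^sub>w (Z3, X3)"
proof -
  have ex: "\<exists>P B. P \<in> carrier_mat d d \<and> B \<in> carrier_mat d d \<and> P * B = 1\<^sub>m d \<and> B * P = 1\<^sub>m d \<and> P * Za = Zb * P \<and> P * Xa = Xb * P"
    if h: "(Za, Xa) \<cong>\<^sub>w (Zb, Xb)" "Za \<in> carrier_mat d d" for Za Xa Zb Xb
  proof -
    obtain P where P: "P \<in> carrier_mat d d" "invertible_mat P" "P * Za = Zb * P" "P * Xa = Xb * P"
      using h by (auto simp: wiso_def Let_def)
    obtain B where B: "P * B = 1\<^sub>m (dim_row P)" "B * P = 1\<^sub>m (dim_row B)"
      using P(2) unfolding invertible_mat_def inverts_mat_def by auto
    have "dim_col B = d" using B(1) P(1) by (metis carrier_matD(1) index_mult_mat(3) index_one_mat(3))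
    moreover have "dim_row B = d" using B(2) P(1) by (metis carrier_matD(2) index_mult_mat(3) index_one_mat(3))
    ultimately show ?thesis using P B by (intro exI[of _ P] exI[of _ B]) auto
  qed
  obtain P1 B1 where P1: "P1 \<in> carrier_mat d d" "B1 \<in> carrier_mat d d" "P1 * B1 = 1\<^sub>m d" "B1 * P1 = 1\<^sub>m d" "P1 * Z1 = Z2 * P1" "P1 * X1 = X2 * P1"
    using ex[OF assms(1) c(1)] by blast
  obtain P2 B2 where P2: "P2 \<in> carrier_mat d d" "B2 \<in> carrier_mat d d" "P2 * B2 = 1\<^sub>m d" "B2 * P2 = 1\<^sub>m d" "P2 * Z2 = Z3 * P2" "P2 * X2 = X3 * P2"
    using ex[OF assms(2) c(3)] by blast
  show ?thesis
  proof (rule wisoI[where P = "P2 * P1" and P' = "B1 * B2" and d = d])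
    show "P2 * P1 * (B1 * B2) = 1\<^sub>m d"
      using P1 P2 by (simp add: assoc_mult_mat[of P2 d d P1 d "B1 * B2" d] assoc_mult_mat[of P1 d d B1 d B2 d, symmetric])
    show "B1 * B2 * (P2 * P1) = 1\<^sub>m d"
      using P1 P2 by (simp add: assoc_mult_mat[of B1 d d B2 d "P2 * P1" d] assoc_mult_mat[of B2 d d P2 d P1 d, symmetric])
    have "P2 * P1 * Z1 = P2 * (P1 * Z1)" using P2(1) P1(1) c(1) by (rule assoc_mult_mat)
    also have "\<dots> = P2 * (Z2 * P1)" using P1 by simp
    also have "\<dots> = (P2 * Z2) * P1" using P2(1) c(3) P1(1) by (rule assoc_mult_mat[symmetric])
    also have "\<dots> = (Z3 * P2) * P1" using P2 by simp
    also have "\<dots> = Z3 * (P2 * P1)" using c(5) P2(1) P1(1) by (rule assoc_mult_mat)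
    finally show "P2 * P1 * Z1 = Z3 * (P2 * P1)" .
    have "P2 * P1 * X1 = P2 * (P1 * X1)" using P2(1) P1(1) c(2) by (rule assoc_mult_mat)
    also have "\<dots> = P2 * (X2 * P1)" using P1 by simp
    also have "\<dots> = (P2 * X2) * P1" using P2(1) c(4) P1(1) by (rule assoc_mult_mat[symmetric])
    also have "\<dots> = (X3 * P2) * P1" using P2 by simp
    also have "\<dots> = X3 * (P2 * P1)" using c(6) P2(1) P1(1) by (rule assoc_mult_mat)
    finally show "P2 * P1 * X1 = X3 * (P2 * P1)" .
  qed (use P1 P2 c in auto)
qed


lemma mat_eqI_gen:
  assumes "dim_row A = dim_row B" "dim_col A = dim_col B" "dim_row B = dim_col B"
    "list_all (\<lambda>r. list_all (\<lambda>s. A $$ (r,s) = B $$ (r,s)) [0..<dim_row B]) [0..<dim_row B]"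
  shows "A = B"
proof (rule eq_matI)
  fix r s assume "r < dim_row B" "s < dim_col B"
  then show "A $$ (r,s) = B $$ (r,s)" using assms by (auto simp: list_all_iff)
qed (use assms in auto)

lemma mat_mul: "mat m k f * mat k l g = mat m l (\<lambda>(i,j). \<Sum>x\<in>{0..<k}. f (i,x) * g (x,j))"
  by (rule eq_matI) (auto simp: scalar_prod_def intro!: sum.cong)

lemma zero_pow': "k \<ge> 1 \<Longrightarrow> (0\<^sub>m d d :: 'a::comm_ring_1 mat) ^\<^sub>m k = 0\<^sub>m d d"
  by (cases k) (auto simp: zero_pow)

lemma F1:
  fixes q a :: "'a::field"
  shows "wtensor n q a (Smod q i) (Smod q j) = Smod q (i+j)"
  unfolding wtensor_def Let_def prod.case Smod_def Mmod_alt N1mod_alt N0mod_def wdsum_def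
  unfolding MZ_pow one_pow
  unfolding MZ_def XX_def zero_mat_def one_mat_def mat_mul kron_mat
  by (simp only: prod.inject, intro conjI; rule mat_eqI_gen; simp add: upt_rec sum2 sum4 ZT_def XT_def XD_def field_simps power_add)

lemma F2:
  fixes q a :: "'a::field"
  shows "wtensor n q a (Smod q i) (Mmod q j) = (MZ q (i+j), (q^i)^n \<cdot>\<^sub>m XX)"
  unfolding wtensor_def Let_def prod.case Smod_def Mmod_alt N1mod_alt N0mod_def wdsum_def
  unfolding MZ_pow one_pow
  unfolding MZ_def XX_def zero_mat_def one_mat_def mat_mul kron_mat
  by (simp only: prod.inject, intro conjI; rule mat_eqI_gen; simp add: upt_rec sum2 sum4 ZT_def XT_def XD_def field_simps power_add)

lemma F3:
  fixes q a :: "'a::field"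
  shows "wtensor n q a (Mmod q j) (Smod q i) = Mmod q (i+j)"
  unfolding wtensor_def Let_def prod.case Smod_def Mmod_alt N1mod_alt N0mod_def wdsum_def
  unfolding MZ_pow one_pow
  unfolding MZ_def XX_def zero_mat_def one_mat_def mat_mul kron_mat
  by (simp only: prod.inject, intro conjI; rule mat_eqI_gen; simp add: upt_rec sum2 sum4 ZT_def XT_def XD_def field_simps power_add)

lemma F4a:
  fixes q a :: "'a::field"
  assumes n: "n \<ge> 1"
  shows "wtensor n q a N0mod N0mod = N0mod"
proof -
  have zpow: "\<And>d. (0\<^sub>m d d :: 'a mat) ^\<^sub>m n = 0\<^sub>m d d" "\<And>d. (0\<^sub>m d d :: 'a mat) ^\<^sub>m (n+1) = 0\<^sub>m d d"
    using n by (auto intro: zero_pow')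
  show ?thesis
  unfolding wtensor_def Let_def prod.case Smod_def Mmod_alt N1mod_alt N0mod_def wdsum_def
  unfolding MZ_pow one_pow zpow
  unfolding MZ_def XX_def zero_mat_def one_mat_def mat_mul kron_mat
  by (simp only: prod.inject, intro conjI; rule mat_eqI_gen; simp add: upt_rec sum2 sum4 ZT_def XT_def XD_def field_simps power_add)
qed

lemma F4b:
  fixes q a :: "'a::field"
  assumes n: "n \<ge> 1"
  shows "wtensor n q a N0mod (Smod q i) = N0mod"
proof -
  have zpow: "\<And>d. (0\<^sub>m d d :: 'a mat) ^\<^sub>m n = 0\<^sub>m d d" "\<And>d. (0\<^sub>m d d :: 'a mat) ^\<^sub>m (n+1) = 0\<^sub>m d d"
    using n by (auto intro: zero_pow')
  show ?thesis
  unfolding wtensor_def Let_def prod.case Smod_def Mmod_alt N1mod_alt N0mod_def wdsum_def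
  unfolding MZ_pow one_pow zpow
  unfolding MZ_def XX_def zero_mat_def one_mat_def mat_mul kron_mat
  by (simp only: prod.inject, intro conjI; rule mat_eqI_gen; simp add: upt_rec sum2 sum4 ZT_def XT_def XD_def field_simps power_add)
qed

lemma F4c:
  fixes q a :: "'a::field"
  assumes n: "n \<ge> 1"
  shows "wtensor n q a (Smod q i) N0mod = N0mod"
proof -
  have zpow: "\<And>d. (0\<^sub>m d d :: 'a mat) ^\<^sub>m n = 0\<^sub>m d d" "\<And>d. (0\<^sub>m d d :: 'a mat) ^\<^sub>m (n+1) = 0\<^sub>m d d"
    using n by (auto intro: zero_pow')
  show ?thesis
  unfolding wtensor_def Let_def prod.case Smod_def Mmod_alt N1mod_alt N0mod_def wdsum_def
  unfolding MZ_pow one_pow zpow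
  unfolding MZ_def XX_def zero_mat_def one_mat_def mat_mul kron_mat
  by (simp only: prod.inject, intro conjI; rule mat_eqI_gen; simp add: upt_rec sum2 sum4 ZT_def XT_def XD_def field_simps power_add)
qed

lemma F5a:
  fixes q a :: "'a::field"
  assumes n: "n \<ge> 1"
  shows "wtensor n q a N0mod N1mod = (0\<^sub>m 2 2, 0\<^sub>m 2 2)"
proof -
  have zpow: "\<And>d. (0\<^sub>m d d :: 'a mat) ^\<^sub>m n = 0\<^sub>m d d" "\<And>d. (0\<^sub>m d d :: 'a mat) ^\<^sub>m (n+1) = 0\<^sub>m d d"
    using n by (auto intro: zero_pow')
  show ?thesis
  unfolding wtensor_def Let_def prod.case Smod_def Mmod_alt N1mod_alt N0mod_def wdsum_def
  unfolding MZ_pow one_pow zpow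
  unfolding MZ_def XX_def zero_mat_def one_mat_def mat_mul kron_mat
  by (simp only: prod.inject, intro conjI; rule mat_eqI_gen; simp add: upt_rec sum2 sum4 ZT_def XT_def XD_def field_simps power_add)
qed

lemma F5b:
  shows "wdsum N0mod N0mod = (0\<^sub>m 2 2, 0\<^sub>m 2 2)"
  unfolding wtensor_def Let_def prod.case Smod_def Mmod_alt N1mod_alt N0mod_def wdsum_def
  unfolding MZ_pow one_pow
  unfolding MZ_def XX_def zero_mat_def one_mat_def mat_mul kron_mat
  by (simp only: prod.inject, intro conjI; rule mat_eqI_gen; simp add: upt_rec sum2 sum4 ZT_def XT_def XD_def field_simps power_add)

lemma F5c:
  fixes q a :: "'a::field"
  assumes n: "n \<ge> 1"
  shows "wtensor n q a N0mod (Mmod q i) = (0\<^sub>m 2 2, 0\<^sub>m 2 2)"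
proof -
  have zpow: "\<And>d. (0\<^sub>m d d :: 'a mat) ^\<^sub>m n = 0\<^sub>m d d" "\<And>d. (0\<^sub>m d d :: 'a mat) ^\<^sub>m (n+1) = 0\<^sub>m d d"
    using n by (auto intro: zero_pow')
  show ?thesis
  unfolding wtensor_def Let_def prod.case Smod_def Mmod_alt N1mod_alt N0mod_def wdsum_def
  unfolding MZ_pow one_pow zpow
  unfolding MZ_def XX_def zero_mat_def one_mat_def mat_mul kron_mat
  by (simp only: prod.inject, intro conjI; rule mat_eqI_gen; simp add: upt_rec sum2 sum4 ZT_def XT_def XD_def field_simps power_add)
qed

lemma F6a:
  fixes q a :: "'a::field"
  assumes n: "n \<ge> 1"
  shows "wtensor n q a N1mod N0mod = N1mod"
proof -
  have zpow: "\<And>d. (0\<^sub>m d d :: 'a mat) ^\<^sub>m n = 0\<^sub>m d d" "\<And>d. (0\<^sub>m d d :: 'a mat) ^\<^sub>m (n+1) = 0\<^sub>m d d"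
    using n by (auto intro: zero_pow')
  show ?thesis
  unfolding wtensor_def Let_def prod.case Smod_def Mmod_alt N1mod_alt N0mod_def wdsum_def
  unfolding MZ_pow one_pow zpow
  unfolding MZ_def XX_def zero_mat_def one_mat_def mat_mul kron_mat
  by (simp only: prod.inject, intro conjI; rule mat_eqI_gen; simp add: upt_rec sum2 sum4 ZT_def XT_def XD_def field_simps power_add)
qed

lemma F6b:
  fixes q a :: "'a::field"
  assumes n: "n \<ge> 1"
  shows "wtensor n q a (Mmod q i) N0mod = N1mod"
proof -
  have zpow: "\<And>d. (0\<^sub>m d d :: 'a mat) ^\<^sub>m n = 0\<^sub>m d d" "\<And>d. (0\<^sub>m d d :: 'a mat) ^\<^sub>m (n+1) = 0\<^sub>m d d"
    using n by (auto intro: zero_pow')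
  show ?thesis
  unfolding wtensor_def Let_def prod.case Smod_def Mmod_alt N1mod_alt N0mod_def wdsum_def
  unfolding MZ_pow one_pow zpow
  unfolding MZ_def XX_def zero_mat_def one_mat_def mat_mul kron_mat
  by (simp only: prod.inject, intro conjI; rule mat_eqI_gen; simp add: upt_rec sum2 sum4 ZT_def XT_def XD_def field_simps power_add)
qed

lemma F6c:
  fixes q a :: "'a::field"
  assumes n: "n \<ge> 1"
  shows "wtensor n q a N1mod (Smod q i) = N1mod"
proof -
  have zpow: "\<And>d. (0\<^sub>m d d :: 'a mat) ^\<^sub>m n = 0\<^sub>m d d" "\<And>d. (0\<^sub>m d d :: 'a mat) ^\<^sub>m (n+1) = 0\<^sub>m d d"
    using n by (auto intro: zero_pow')
  show ?thesis
  unfolding wtensor_def Let_def prod.case Smod_def Mmod_alt N1mod_alt N0mod_def wdsum_def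
  unfolding MZ_pow one_pow zpow
  unfolding MZ_def XX_def zero_mat_def one_mat_def mat_mul kron_mat
  by (simp only: prod.inject, intro conjI; rule mat_eqI_gen; simp add: upt_rec sum2 sum4 ZT_def XT_def XD_def field_simps power_add)
qed

lemma F6d:
  fixes q a :: "'a::field"
  assumes n: "n \<ge> 1"
  shows "wtensor n q a (Smod q i) N1mod = (0\<^sub>m 2 2, (q^i)^n \<cdot>\<^sub>m XX)"
proof -
  have zpow: "\<And>d. (0\<^sub>m d d :: 'a mat) ^\<^sub>m n = 0\<^sub>m d d" "\<And>d. (0\<^sub>m d d :: 'a mat) ^\<^sub>m (n+1) = 0\<^sub>m d d"
    using n by (auto intro: zero_pow')
  show ?thesis
  unfolding wtensor_def Let_def prod.case Smod_def Mmod_alt N1mod_alt N0mod_def wdsum_def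
  unfolding MZ_pow one_pow zpow
  unfolding MZ_def XX_def zero_mat_def one_mat_def mat_mul kron_mat
  by (simp only: prod.inject, intro conjI; rule mat_eqI_gen; simp add: upt_rec sum2 sum4 ZT_def XT_def XD_def field_simps power_add)
qed

lemma F7a:
  fixes q a :: "'a::field"
  assumes n: "n \<ge> 1"
  shows "wtensor n q a N1mod N1mod = (ZT 0 0 0 0, XT 0 (-0))"
proof -
  have zpow: "\<And>d. (0\<^sub>m d d :: 'a mat) ^\<^sub>m n = 0\<^sub>m d d" "\<And>d. (0\<^sub>m d d :: 'a mat) ^\<^sub>m (n+1) = 0\<^sub>m d d"
    using n by (auto intro: zero_pow')
  show ?thesis
  unfolding wtensor_def Let_def prod.case Smod_def Mmod_alt N1mod_alt N0mod_def wdsum_def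
  unfolding MZ_pow one_pow zpow
  unfolding MZ_def XX_def zero_mat_def one_mat_def mat_mul kron_mat
  by (simp only: prod.inject, intro conjI; rule mat_eqI_gen; simp add: upt_rec sum2 sum4 ZT_def XT_def XD_def field_simps power_add)
qed

lemma F7b:
  shows "wdsum N1mod N1mod = (ZT 0 0 0 0, XD)"
  unfolding wtensor_def Let_def prod.case Smod_def Mmod_alt N1mod_alt N0mod_def wdsum_def
  unfolding MZ_pow one_pow
  unfolding MZ_def XX_def zero_mat_def one_mat_def mat_mul kron_mat
  by (simp only: prod.inject, intro conjI; rule mat_eqI_gen; simp add: upt_rec sum2 sum4 ZT_def XT_def XD_def field_simps power_add)

lemma F7c:
  fixes q a :: "'a::field"
  assumes n: "n \<ge> 1"
  shows "wtensor n q a N1mod (Mmod q i) = (ZT 0 0 0 0, XT 0 (-0))"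
proof -
  have zpow: "\<And>d. (0\<^sub>m d d :: 'a mat) ^\<^sub>m n = 0\<^sub>m d d" "\<And>d. (0\<^sub>m d d :: 'a mat) ^\<^sub>m (n+1) = 0\<^sub>m d d"
    using n by (auto intro: zero_pow')
  show ?thesis
  unfolding wtensor_def Let_def prod.case Smod_def Mmod_alt N1mod_alt N0mod_def wdsum_def
  unfolding MZ_pow one_pow zpow
  unfolding MZ_def XX_def zero_mat_def one_mat_def mat_mul kron_mat
  by (simp only: prod.inject, intro conjI; rule mat_eqI_gen; simp add: upt_rec sum2 sum4 ZT_def XT_def XD_def field_simps power_add)
qed

lemma F7d:
  fixes q a :: "'a::field"
  assumes n: "n \<ge> 1"
  shows "wtensor n q a (Mmod q i) N1mod = (ZT 0 0 0 0, XT ((q^i)^n) ((q^(i+1))^n))"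
proof -
  have zpow: "\<And>d. (0\<^sub>m d d :: 'a mat) ^\<^sub>m n = 0\<^sub>m d d" "\<And>d. (0\<^sub>m d d :: 'a mat) ^\<^sub>m (n+1) = 0\<^sub>m d d"
    using n by (auto intro: zero_pow')
  show ?thesis
  unfolding wtensor_def Let_def prod.case Smod_def Mmod_alt N1mod_alt N0mod_def wdsum_def
  unfolding MZ_pow one_pow zpow
  unfolding MZ_def XX_def zero_mat_def one_mat_def mat_mul kron_mat
  by (simp only: prod.inject, intro conjI; rule mat_eqI_gen; simp add: upt_rec sum2 sum4 ZT_def XT_def XD_def field_simps power_add)
qed

lemma F3a:
  fixes q a :: "'a::field"
  shows "wtensor n q a (Mmod q i) (Mmod q j) = (ZT (q^(i+j)) (q^(i+j+1)) (q^(i+j+2)) (a * (1 - inverse (q^2)) * ((q^(i+1))^(n+1) * q^(j+1))), XT ((q^i)^n) ((q^(i+1))^n))"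
  unfolding wtensor_def Let_def prod.case Smod_def Mmod_alt N1mod_alt N0mod_def wdsum_def
  unfolding MZ_pow one_pow
  unfolding MZ_def XX_def zero_mat_def one_mat_def mat_mul kron_mat
  by (simp only: prod.inject, intro conjI; rule mat_eqI_gen; simp add: upt_rec sum2 sum4 ZT_def XT_def XD_def field_simps power_add)

lemma F3b:
  fixes q a :: "'a::field"
  shows "wtensor n q a (Mmod q j) (Mmod q i) = (ZT (q^(i+j)) (q^(i+j+1)) (q^(i+j+2)) (a * (1 - inverse (q^2)) * ((q^(j+1))^(n+1) * q^(i+1))), XT ((q^j)^n) ((q^(j+1))^n))"
  unfolding wtensor_def Let_def prod.case Smod_def Mmod_alt N1mod_alt N0mod_def wdsum_def
  unfolding MZ_pow one_pow
  unfolding MZ_def XX_def zero_mat_def one_mat_def mat_mul kron_mat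
  by (simp only: prod.inject, intro conjI; rule mat_eqI_gen; simp add: upt_rec sum2 sum4 ZT_def XT_def XD_def field_simps power_add)

lemma FD:
  fixes q a :: "'a::field"
  shows "wdsum (Mmod q s) (Mmod q (s+1)) = (ZT (q^s) (q^(s+1)) (q^(s+2)) 0, XD)"
  unfolding wtensor_def Let_def prod.case Smod_def Mmod_alt N1mod_alt N0mod_def wdsum_def
  unfolding MZ_pow one_pow
  unfolding MZ_def XX_def zero_mat_def one_mat_def mat_mul kron_mat
  by (simp only: prod.inject, intro conjI; rule mat_eqI_gen; simp add: upt_rec sum2 sum4 ZT_def XT_def XD_def field_simps power_add)


lemma prim_facts:
  fixes q :: "'a::field"
  assumes "n \<ge> 1" "primitive_root (2 * n) q"
  shows "q \<noteq> 0" "q ^ n = -1"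
proof -
  have q2n: "q ^ (2 * n) = 1" and ne: "q ^ n \<noteq> 1" using assms unfolding primitive_root_def by auto
  show "q \<noteq> 0" using q2n assms(1) by (metis mult_is_0 power_0_left zero_neq_numeral zero_neq_one not_one_le_zero)
  have "(q ^ n) ^ 2 = 1" using q2n by (simp add: power_mult[symmetric] mult.commute)
  then show "q ^ n = -1" using ne by (simp add: power2_eq_1_iff)
qed

lemma keyt:
  fixes q a X :: "'a::field"
  assumes "q \<noteq> 0"
  defines "d \<equiv> a * (1 - inverse (q^2)) * X"
  shows "d + (d / (q^s - q^(s+2))) * q^(s+2) = (d / (q^s - q^(s+2))) * q^s"
proof (cases "q^2 = 1")
  case True
  then have "d = 0" by (simp add: d_def)
  then show ?thesis by simp
next
  case False
  have "q^s - q^(s+2) = q^s * (1 - q^2)" by (simp only: power_add right_diff_distrib mult_1_right)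
  moreover have "q^s * (1 - q^2) \<noteq> 0" using False assms by simp
  ultimately have ne: "q^s - q^(s+2) \<noteq> 0" by simp
  have "(d / (q^s - q^(s+2))) * q^s - (d / (q^s - q^(s+2))) * q^(s+2) = (d / (q^s - q^(s+2))) * (q^s - q^(s+2))"
    by (simp only: right_diff_distrib)
  also have "\<dots> = d" using ne by (rule nonzero_divide_mult_cancel_right[THEN sym, THEN sym, unfolded divide_inverse] | simp)
  finally have "(d / (q^s - q^(s+2))) * q^s - (d / (q^s - q^(s+2))) * q^(s+2) = d" .
  then show ?thesis by (simp add: algebra_simps)
qed

lemma smult_mat_mat: "c \<cdot>\<^sub>m mat m k f = mat m k (\<lambda>ij. c * f ij)"
  by (rule eq_matI) auto

lemma iso_diag2:
  fixes p :: "'a::field"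
  assumes "p \<noteq> 0"
  shows "(MZ q s, p \<cdot>\<^sub>m XX) \<cong>\<^sub>w (MZ q s, XX)"
proof -
  define P :: "'a mat" where "P = mat 2 2 (\<lambda>(r,c). if r = c then (if r = 0 then p else 1) else 0)"
  define P' :: "'a mat" where "P' = mat 2 2 (\<lambda>(r,c). if r = c then (if r = 0 then 1/p else 1) else 0)"
  have 11: "P * P' = 1\<^sub>m 2"
    unfolding P_def P'_def one_mat_def mat_mul by (rule mat_eqI_gen; simp add: upt_rec sum2 assms)
  have 12: "P' * P = 1\<^sub>m 2"
    unfolding P_def P'_def one_mat_def mat_mul by (rule mat_eqI_gen; simp add: upt_rec sum2 assms)
  note 1 = 11 12
  have 21: "P * MZ q s = MZ q s * P"
    unfolding P_def MZ_def XX_def smult_mat_mat mat_mul by (rule mat_eqI_gen; simp add: upt_rec sum2)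
  have 22: "P * (p \<cdot>\<^sub>m XX) = XX * P"
    unfolding P_def MZ_def XX_def smult_mat_mat mat_mul by (rule mat_eqI_gen; simp add: upt_rec sum2)
  note 2 = 21 22
  show ?thesis by (rule wisoI[OF _ _ _ _ 1 2]) (auto simp: P_def P'_def MZ_def)
qed

lemma iso_zero2:
  fixes p :: "'a::field"
  assumes "p \<noteq> 0"
  shows "(0\<^sub>m 2 2, XX) \<cong>\<^sub>w (0\<^sub>m 2 2, p \<cdot>\<^sub>m XX)"
proof -
  define P :: "'a mat" where "P = mat 2 2 (\<lambda>(r,c). if r = c then (if r = 0 then 1 else p) else 0)"
  define P' :: "'a mat" where "P' = mat 2 2 (\<lambda>(r,c). if r = c then (if r = 0 then 1 else 1/p) else 0)"
  have 11: "P * P' = 1\<^sub>m 2"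
    unfolding P_def P'_def one_mat_def mat_mul by (rule mat_eqI_gen; simp add: upt_rec sum2 assms)
  have 12: "P' * P = 1\<^sub>m 2"
    unfolding P_def P'_def one_mat_def mat_mul by (rule mat_eqI_gen; simp add: upt_rec sum2 assms)
  note 1 = 11 12
  have 21: "P * 0\<^sub>m 2 2 = 0\<^sub>m 2 2 * P"
    unfolding P_def zero_mat_def XX_def smult_mat_mat mat_mul by (rule mat_eqI_gen; simp add: upt_rec sum2)
  have 22: "P * XX = (p \<cdot>\<^sub>m XX) * P"
    unfolding P_def zero_mat_def XX_def smult_mat_mat mat_mul by (rule mat_eqI_gen; simp add: upt_rec sum2)
  note 2 = 21 22
  show ?thesis by (rule wisoI[OF _ _ _ _ 1 2]) (auto simp: P_def P'_def)
qed


lemma ZT_carrier: "ZT w0 w1 w2 d \<in> carrier_mat 4 4" by (simp add: ZT_def)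
lemma XT_carrier: "XT p p' \<in> carrier_mat 4 4" by (simp add: XT_def)
lemma XD_carrier: "XD \<in> carrier_mat 4 4" by (simp add: XD_def)

theorem theorem4p2:
  fixes q a :: "'k::field_char_0" and n :: nat
  assumes "alg_closed_field TYPE('k)"
    and "n \<ge> 1"
    and "primitive_root (2 * n) q"
    and "a \<noteq> 0"
  defines "T \<equiv> wtensor n q a"
  shows "\<forall>i j :: nat.
     (T (Smod q i) (Smod q j) \<cong>\<^sub>w Smod q (i + j) \<and> Smod q (i + j) \<cong>\<^sub>w T (Smod q j) (Smod q i)) \<and>
     (T (Smod q i) (Mmod q j) \<cong>\<^sub>w Mmod q (i + j) \<and> Mmod q (i + j) \<cong>\<^sub>w T (Mmod q j) (Smod q i)) \<and>
     (T (Mmod q i) (Mmod q j) \<cong>\<^sub>w wdsum (Mmod q (i + j)) (Mmod q (i + j + 1)) \<and>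
        wdsum (Mmod q (i + j)) (Mmod q (i + j + 1)) \<cong>\<^sub>w T (Mmod q j) (Mmod q i)) \<and>
     (T N0mod N0mod \<cong>\<^sub>w N0mod \<and> N0mod \<cong>\<^sub>w T N0mod (Smod q i) \<and> T N0mod (Smod q i) \<cong>\<^sub>w T (Smod q i) N0mod) \<and>
     (T N0mod N1mod \<cong>\<^sub>w wdsum N0mod N0mod \<and> wdsum N0mod N0mod \<cong>\<^sub>w T N0mod (Mmod q i)) \<and>
     (T N1mod N0mod \<cong>\<^sub>w N1mod \<and> N1mod \<cong>\<^sub>w T (Mmod q i) N0mod \<and> T (Mmod q i) N0mod \<cong>\<^sub>w T N1mod (Smod q i) \<and>
        T N1mod (Smod q i) \<cong>\<^sub>w T (Smod q i) N1mod) \<and>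
     (T N1mod N1mod \<cong>\<^sub>w wdsum N1mod N1mod \<and> wdsum N1mod N1mod \<cong>\<^sub>w T N1mod (Mmod q i) \<and>
        T N1mod (Mmod q i) \<cong>\<^sub>w T (Mmod q i) N1mod)"
proof -
  have q0: "q \<noteq> 0" and qn: "q ^ n = -1" using prim_facts[OF assms(2,3)] by auto
  have qn': "(q^(k+1))^n = - ((q^k)^n)" for k by (simp add: power_mult_distrib qn)
  have pn0: "(q^k)^n \<noteq> 0" for k using q0 by simp
  have S_c: "fst (Smod q k) \<in> carrier_mat 1 1" "snd (Smod q k) \<in> carrier_mat 1 1" for k by (auto simp: Smod_def)
  have M_c: "MZ q k \<in> carrier_mat 2 2" "XX \<in> carrier_mat 2 2" for k by (auto simp: MZ_def XX_def)
  have N0refl: "N0mod \<cong>\<^sub>w N0mod" unfolding N0mod_def by (rule wiso_refl) auto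
  have N1refl: "N1mod \<cong>\<^sub>w N1mod" unfolding N1mod_def by (rule wiso_refl) auto
  have Z2refl: "(0\<^sub>m 2 2, 0\<^sub>m 2 2) \<cong>\<^sub>w ((0\<^sub>m 2 2, 0\<^sub>m 2 2) :: 'k wmod)" by (rule wiso_refl) auto
  show ?thesis unfolding T_def
  proof (intro allI conjI)
    fix i j :: nat
    show "wtensor n q a (Smod q i) (Smod q j) \<cong>\<^sub>w Smod q (i + j)"
      unfolding F1 unfolding Smod_def by (rule wiso_refl) auto
    show "Smod q (i + j) \<cong>\<^sub>w wtensor n q a (Smod q j) (Smod q i)"
      unfolding F1 unfolding Smod_def add.commute[of j i] by (rule wiso_refl) auto
    show "wtensor n q a (Smod q i) (Mmod q j) \<cong>\<^sub>w Mmod q (i + j)"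
      unfolding F2 unfolding Mmod_alt by (rule iso_diag2[OF pn0])
    show "Mmod q (i + j) \<cong>\<^sub>w wtensor n q a (Mmod q j) (Smod q i)"
      unfolding F3 unfolding Mmod_alt by (rule wiso_refl[OF M_c])
    show "wtensor n q a (Mmod q i) (Mmod q j) \<cong>\<^sub>w wdsum (Mmod q (i + j)) (Mmod q (i + j + 1))"
      unfolding F3a FD qn' by (rule iso_gen(1)[OF keyt[OF q0]])
    show "wdsum (Mmod q (i + j)) (Mmod q (i + j + 1)) \<cong>\<^sub>w wtensor n q a (Mmod q j) (Mmod q i)"
      unfolding F3b FD qn' by (rule iso_gen(2)[OF keyt[OF q0]])
    show "wtensor n q a N0mod N0mod \<cong>\<^sub>w N0mod" unfolding F4a[OF assms(2)] by (rule N0refl)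
    show "N0mod \<cong>\<^sub>w wtensor n q a N0mod (Smod q i)" unfolding F4b[OF assms(2)] by (rule N0refl)
    show "wtensor n q a N0mod (Smod q i) \<cong>\<^sub>w wtensor n q a (Smod q i) N0mod"
      unfolding F4b[OF assms(2)] F4c[OF assms(2)] by (rule N0refl)
    show "wtensor n q a N0mod N1mod \<cong>\<^sub>w wdsum N0mod N0mod"
      unfolding F5a[OF assms(2)] F5b by (rule Z2refl)
    show "wdsum N0mod N0mod \<cong>\<^sub>w wtensor n q a N0mod (Mmod q i)"
      unfolding F5c[OF assms(2)] F5b by (rule Z2refl)
    show "wtensor n q a N1mod N0mod \<cong>\<^sub>w N1mod" unfolding F6a[OF assms(2)] by (rule N1refl)
    show "N1mod \<cong>\<^sub>w wtensor n q a (Mmod q i) N0mod" unfolding F6b[OF assms(2)] by (rule N1refl)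
    show "wtensor n q a (Mmod q i) N0mod \<cong>\<^sub>w wtensor n q a N1mod (Smod q i)"
      unfolding F6b[OF assms(2)] F6c[OF assms(2)] by (rule N1refl)
    show "wtensor n q a N1mod (Smod q i) \<cong>\<^sub>w wtensor n q a (Smod q i) N1mod"
      unfolding F6c[OF assms(2)] F6d[OF assms(2)] unfolding N1mod_alt by (rule iso_zero2[OF pn0])
    have g0: "(ZT 0 0 0 0, XT 0 (-0)) \<cong>\<^sub>w ((ZT 0 0 0 0, XD) :: 'k wmod)"
      by (rule iso_gen(1)[where t = 0]) simp
    have g0': "(ZT 0 0 0 0, XD) \<cong>\<^sub>w ((ZT 0 0 0 0, XT 0 (-0)) :: 'k wmod)"
      by (rule iso_gen(2)[where t = 0]) simp
    have gp: "(ZT 0 0 0 0, XD) \<cong>\<^sub>w ((ZT 0 0 0 0, XT ((q^i)^n) (-((q^i)^n))) :: 'k wmod)"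
      by (rule iso_gen(2)[where t = 0]) simp
    show "wtensor n q a N1mod N1mod \<cong>\<^sub>w wdsum N1mod N1mod"
      unfolding F7a[OF assms(2)] F7b by (rule g0)
    show "wdsum N1mod N1mod \<cong>\<^sub>w wtensor n q a N1mod (Mmod q i)"
      unfolding F7c[OF assms(2)] F7b by (rule g0')
    show "wtensor n q a N1mod (Mmod q i) \<cong>\<^sub>w wtensor n q a (Mmod q i) N1mod"
      unfolding F7c[OF assms(2)] F7d[OF assms(2)] qn'
      by (rule wiso_trans[where d = 4, OF g0 gp]) (simp_all add: ZT_carrier XT_carrier XD_carrier)
  qed
qed

end
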